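(* There is no homomorphism $G^2 \to G^1$.
   Context: Graphs are simple and loopless; homomorphisms are edge-preserving vertex maps. $G^1$ is the graph with vertex set $\omega\times\{0,1\}$ whose edges are all pairs $\{(n,i),(m,i)\}$ with $n\ne m$, $i\in\{0,1\}$ and $\lfloor\sqrt n\rfloor=\lfloor\sqrt m\rfloor$, together with all pairs $\{(n,0),(m,1)\}$ with $n<m$. $G^2$ is the graph with vertex set $\{r\}\cup A_1\cup A_2$ (pairwise disjoint), where $A_1$ is the disjoint union of complete graphs $K^1_i$ on $i$ vertices ($i\ge1$) and $A_2$ is the disjoint union of complete graphs $K^2_{x,j}$ on $j$ vertices for $x\in A_1$, $j\ge 1$. The edges of $G^2$ are the edges of all these complete graphs, all pairs $\{r,x\}$ with $x\in A_1$, and all pairs $\{x,y\}$ with $x\in A_1$ and $y\in V(K^2_{x,j})$ for some $j$. *)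

theory Defs
  imports Complex_Main
begin

text \<open>A graph is given by a vertex set V and an edge relation E (intended symmetric,
irreflexive, on V). A homomorphism maps vertices to vertices and edges to edges.\<close>

definition is_hom :: "'a set \<Rightarrow> ('a \<Rightarrow> 'a \<Rightarrow> bool) \<Rightarrow> 'b set \<Rightarrow> ('b \<Rightarrow> 'b \<Rightarrow> bool) \<Rightarrow> ('a \<Rightarrow> 'b) \<Rightarrow> bool" where
  "is_hom V E W F f \<longleftrightarrow>
     (\<forall>v\<in>V. f v \<in> W) \<and> (\<forall>u\<in>V. \<forall>v\<in>V. E u v \<longrightarrow> F (f u) (f v))"

definition G1_V :: "(nat \<times> nat) set" where
  "G1_V = {(n, i). i \<in> {0, 1}}"

definition G1_E :: "nat \<times> nat \<Rightarrow> nat \<times> nat \<Rightarrow> bool" where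
  "G1_E a b \<longleftrightarrow> a \<in> G1_V \<and> b \<in> G1_V \<and>
     ((snd a = snd b \<and> fst a \<noteq> fst b \<and>
        \<lfloor>sqrt (real (fst a))\<rfloor> = \<lfloor>sqrt (real (fst b))\<rfloor>)
      \<or> (snd a = 0 \<and> snd b = 1 \<and> fst a < fst b)
      \<or> (snd b = 0 \<and> snd a = 1 \<and> fst b < fst a))"

text \<open>Root is r; A1 i k is the k-th vertex (k < i) of the complete graph K^1_i (i \<ge> 1);
A2 i k j l is the l-th vertex (l < j) of K^2_{x,j} where x = A1 i k.\<close>
datatype g2v = Root | A1 nat nat | A2 nat nat nat nat

definition G2_V :: "g2v set" where
  "G2_V = {Root} \<union> {A1 i k | i k. k < i} \<union> {A2 i k j l | i k j l. k < i \<and> l < j}"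

fun G2_adj :: "g2v \<Rightarrow> g2v \<Rightarrow> bool" where
  "G2_adj (A1 i k) (A1 i' k') = (i = i' \<and> k \<noteq> k')"
| "G2_adj (A2 i k j l) (A2 i' k' j' l') = (i = i' \<and> k = k' \<and> j = j' \<and> l \<noteq> l')"
| "G2_adj Root (A1 i k) = True"
| "G2_adj (A1 i k) Root = True"
| "G2_adj (A1 i k) (A2 i' k' j l) = (i = i' \<and> k = k')"
| "G2_adj (A2 i' k' j l) (A1 i k) = (i = i' \<and> k = k')"
| "G2_adj _ _ = False"

definition G2_E :: "g2v \<Rightarrow> g2v \<Rightarrow> bool" where
  "G2_E a b \<longleftrightarrow> a \<in> G2_V \<and> b \<in> G2_V \<and> G2_adj a b"

end

theory Submission
  imports Defs
begin

lemma sqrt_bound: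
  assumes "\<lfloor>sqrt (real n)\<rfloor> = \<lfloor>sqrt (real a)\<rfloor>"
  shows "n \<le> (a+1)^2"
proof -
  have "sqrt (real n) < of_int \<lfloor>sqrt (real a)\<rfloor> + 1"
    using assms by linarith
  also have "\<dots> \<le> sqrt (real a) + 1" by linarith
  also have "\<dots> \<le> real a + 1"
  proof (cases "a = 0")
    case False
    then have "real a \<le> real a * real a" by simp
    then have "sqrt (real a) \<le> sqrt (real a * real a)" by (rule real_sqrt_le_mono)
    then show ?thesis by simp
  qed simp
  finally have "sqrt (real n) < real a + 1" .
  then have "sqrt (real n)^2 < (real a + 1)^2"
    by (intro power_strict_mono) auto
  then have "real n < (real a + 1)^2" by simp
  moreover have "real ((a+1)^2) = (real a + 1)^2" by simp
  ultimately have "real n < real ((a+1)^2)" by linarith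
  then show ?thesis by linarith
qed

definition S1 :: "nat \<Rightarrow> (nat \<times> nat) set" where
  "S1 b = {..(b+1)^2} \<times> {0,1}"

lemma S1_fin: "finite (S1 b)" unfolding S1_def by simp

lemma le_sq: "(b::nat) \<le> (b+1)^2"
  by (simp add: power2_eq_square)

lemma nbr1: "G1_E (b,1) y \<Longrightarrow> y \<in> S1 b"
  unfolding G1_E_def S1_def G1_V_def
  using sqrt_bound[of "fst y" b] le_sq[of b] by (cases y) auto

lemma nbr0: "G1_E (a,0) (n,0) \<Longrightarrow> (n,0) \<in> {..(a+1)^2} \<times> {0::nat}"
  unfolding G1_E_def
  using sqrt_bound[of n a] by auto

lemma G1_irrefl: "\<not> G1_E x x"
  unfolding G1_E_def by auto

lemma clique_card:
  assumes hom: "is_hom G2_V G2_E G1_V G1_E f"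
    and K: "\<forall>x\<in>K. \<forall>y\<in>K. x \<noteq> y \<longrightarrow> G2_E x y"
    and KS: "f ` K \<subseteq> S" and S: "finite S"
  shows "card K \<le> card S"
proof -
  have KV: "K \<subseteq> G2_V" if "card K \<ge> 2"
  proof
    fix x assume "x \<in> K"
    have "K - {x} \<noteq> {}"
    proof
      assume "K - {x} = {}"
      then have "K \<subseteq> {x}" by blast
      then have "card K \<le> card {x}" by (rule card_mono[rotated]) simp
      then show False using that by simp
    qed
    then obtain y where "y \<in> K" "y \<noteq> x" by blast
    then show "x \<in> G2_V" using K \<open>x \<in> K\<close> unfolding G2_E_def by blast
  qed
  show ?thesis
  proof (cases "card K \<ge> 2")
    case True
    have "inj_on f K"
    proof (rule inj_onI)
      fix x y assume "x \<in> K" "y \<in> K" "f x = f y"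
      show "x = y"
      proof (rule ccontr)
        assume "x \<noteq> y"
        then have "G2_E x y" using K \<open>x \<in> K\<close> \<open>y \<in> K\<close> by blast
        then have "G1_E (f x) (f y)" using hom KV[OF True] \<open>x \<in> K\<close> \<open>y \<in> K\<close>
          unfolding is_hom_def by blast
        then show False using \<open>f x = f y\<close> G1_irrefl by metis
      qed
    qed
    then show ?thesis using card_inj_on_le KS S by blast
  next
    case False
    then have "card K \<le> 1" by simp
    show ?thesis
    proof (cases "K = {}")
      case True then show ?thesis by simp
    next
      case ne: False
      then obtain x where "x \<in> K" by blast
      then have "f x \<in> S" using KS by blast
      then have "card S \<ge> 1" using S by (metis One_nat_def Suc_leI card_gt_0_iff empty_iff)
      then show ?thesis using \<open>card K \<le> 1\<close> by simp
    qed
  qed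
qed

theorem claim2:
  shows "\<not> (\<exists>f. is_hom G2_V G2_E G1_V G1_E f)"
proof
  assume "\<exists>f. is_hom G2_V G2_E G1_V G1_E f"
  then obtain f where hom: "is_hom G2_V G2_E G1_V G1_E f" by blast
  have inV: "\<And>v. v \<in> G2_V \<Longrightarrow> f v \<in> G1_V" using hom unfolding is_hom_def by blast
  have edge: "\<And>u v. G2_E u v \<Longrightarrow> G1_E (f u) (f v)"
    using hom unfolding is_hom_def G2_E_def by blast
  define C1 where "C1 i = (\<lambda>k. A1 i k) ` {..<i}" for i
  have C1card: "card (C1 i) = i" for i
    unfolding C1_def by (subst card_image) (auto simp: inj_on_def)
  have C1cl: "\<forall>x\<in>C1 i. \<forall>y\<in>C1 i. x \<noteq> y \<longrightarrow> G2_E x y" for i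
    unfolding C1_def G2_E_def G2_V_def by auto
  have C1root: "x \<in> C1 i \<Longrightarrow> G2_E Root x" for x i
    unfolding C1_def G2_E_def G2_V_def by auto
  define C2 where "C2 i k j = (\<lambda>l. A2 i k j l) ` {..<j}" for i k j
  have C2card: "card (C2 i k j) = j" for i k j
    unfolding C2_def by (subst card_image) (auto simp: inj_on_def)
  have C2cl: "k < i \<Longrightarrow> \<forall>x\<in>C2 i k j. \<forall>y\<in>C2 i k j. x \<noteq> y \<longrightarrow> G2_E x y" for i k j
    unfolding C2_def G2_E_def G2_V_def by auto
  have C2adj: "k < i \<Longrightarrow> x \<in> C2 i k j \<Longrightarrow> G2_E (A1 i k) x" for x i k j
    unfolding C2_def G2_E_def G2_V_def by auto
  have layer1: False if v: "f v = (b,1)"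
    and cl: "\<forall>x\<in>K. \<forall>y\<in>K. x \<noteq> y \<longrightarrow> G2_E x y"
    and adj: "\<And>x. x \<in> K \<Longrightarrow> G2_E v x"
    and cK: "card K = card (S1 b) + 1" for v b K
  proof -
    have "f ` K \<subseteq> S1 b"
    proof
      fix y assume "y \<in> f ` K"
      then obtain x where "x \<in> K" "y = f x" by blast
      then have "G1_E (b,1) y" using edge[OF adj] v by metis
      then show "y \<in> S1 b" by (rule nbr1)
    qed
    from clique_card[OF hom cl this S1_fin] cK show False by simp
  qed
  have "Root \<in> G2_V" unfolding G2_V_def by simp
  then have "f Root \<in> G1_V" by (rule inV)
  then obtain a s where fr: "f Root = (a,s)" and s: "s = 0 \<or> s = 1"
    unfolding G1_V_def by auto
  show False
  proof (cases "s = 1")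
    case True
    show False
      by (rule layer1[of Root a "C1 (card (S1 a) + 1)"])
        (use True fr C1cl C1root C1card in auto)
  next
    case False
    then have s0: "s = 0" using s by simp
    define i where "i = (a+1)^2 + 2"
    have "\<exists>x\<in>C1 i. snd (f x) \<noteq> 0"
    proof (rule ccontr)
      assume "\<not> ?thesis"
      then have "f ` C1 i \<subseteq> {..(a+1)^2} \<times> {0::nat}"
        using nbr0 edge[OF C1root] fr s0
        by (smt (verit, best) image_subset_iff prod.collapse)
      from clique_card[OF hom C1cl this] have "card (C1 i) \<le> card ({..(a+1)^2} \<times> {0::nat})"
        by simp
      then show False unfolding C1card i_def by simp
    qed
    then obtain x where x: "x \<in> C1 i" "snd (f x) \<noteq> 0" by blast
    then obtain k where k: "k < i" "x = A1 i k" unfolding C1_def by auto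
    have "x \<in> G2_V" using k unfolding G2_V_def by auto
    then have "f x \<in> G1_V" by (rule inV)
    then obtain b where fx: "f x = (b,1)" using x(2) unfolding G1_V_def by auto
    show False
      by (rule layer1[of x b "C2 i k (card (S1 b) + 1)"])
        (use fx k C2cl C2adj C2card in auto)
  qed
qed

end
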